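(* Let $\theta(3)$ be the quiver with two vertices $1,2$ and three arrows $a,b,c$ from $1$ to $2$. Let $W\in\operatorname{Rep}(\theta(3),(3,3))$ be such that $W(a),W(b),W(c)$ are linearly independent skew-symmetric $3\times3$ matrices, and let $\sigma=(1,-1)$ (i.e. $\sigma(1)=1$, $\sigma(2)=-1$). Then $n\sigma\in S(W)$ for some integer $n\ge1$, but $\sigma\notin S(W)$; in particular $S(W)$ is not saturated.
   Context: Work over an algebraically closed field $k$ of characteristic zero. $\operatorname{Rep}(\theta(3),(3,3))$ is the space of triples of $3\times3$ matrices, acted on by $\operatorname{GL}_3\times\operatorname{GL}_3$ via $(g_1,g_2)\cdot W(a)=g_2W(a)g_1^{-1}$. $\operatorname{SI}_\sigma$ is the space of polynomial functions $f$ with $g\cdot f=\det(g_1)^{\sigma(1)}\det(g_2)^{\sigma(2)}f$, and $S(W)=\{\sigma\in\mathbb{Z}^2\mid \exists f\in\operatorname{SI}_\sigma,\ f(W)\neq0\}$. *)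

theory Defs
  imports "HOL-Analysis.Analysis" "HOL-Computational_Algebra.Polynomial"
begin

datatype theta3_arrow = Arr_a | Arr_b | Arr_c

type_synonym 'k rep33 = "theta3_arrow \<Rightarrow> 'k^3^3"

definition alg_closed :: "'k::field itself \<Rightarrow> bool" where
  "alg_closed _ \<longleftrightarrow> (\<forall>p::'k poly. degree p \<ge> 1 \<longrightarrow> (\<exists>x. poly p x = 0))"

inductive_set poly_fun :: "('k::comm_ring_1 rep33 \<Rightarrow> 'k) set" where
  const: "(\<lambda>W. c) \<in> poly_fun"
| coord: "(\<lambda>W. W x $ i $ j) \<in> poly_fun"
| add: "f \<in> poly_fun \<Longrightarrow> g \<in> poly_fun \<Longrightarrow> (\<lambda>W. f W + g W) \<in> poly_fun"
| mult: "f \<in> poly_fun \<Longrightarrow> g \<in> poly_fun \<Longrightarrow> (\<lambda>W. f W * g W) \<in> poly_fun"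

definition rep_act :: "'k::field^3^3 \<Rightarrow> 'k^3^3 \<Rightarrow> 'k rep33 \<Rightarrow> 'k rep33" where
  "rep_act g1 g2 W = (\<lambda>x. g2 ** W x ** matrix_inv g1)"

text \<open>SI_sigma: polynomial f with g.f = det(g1)^sigma(1) det(g2)^sigma(2) f,
  where (g.f)(W) = f(g^{-1}.W).\<close>
definition SI :: "int \<times> int \<Rightarrow> ('k::field rep33 \<Rightarrow> 'k) set" where
  "SI \<sigma> = {f \<in> poly_fun. \<forall>g1 g2 :: 'k^3^3. invertible g1 \<and> invertible g2 \<longrightarrow>
      (\<forall>W. f (rep_act (matrix_inv g1) (matrix_inv g2) W)
           = det g1 powi (fst \<sigma>) * det g2 powi (snd \<sigma>) * f W)}"

definition S_W :: "'k::field rep33 \<Rightarrow> (int \<times> int) set" where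
  "S_W W = {\<sigma>. \<exists>f \<in> SI \<sigma>. f W \<noteq> 0}"

definition skew_symmetric :: "'k::comm_ring_1^3^3 \<Rightarrow> bool" where
  "skew_symmetric M \<longleftrightarrow> transpose M = - M"

definition lin_indep3 :: "'k::field^3^3 \<Rightarrow> 'k^3^3 \<Rightarrow> 'k^3^3 \<Rightarrow> bool" where
  "lin_indep3 A B C \<longleftrightarrow> (\<forall>\<alpha> \<beta> \<gamma>. (\<forall>i j. \<alpha> * A $ i $ j + \<beta> * B $ i $ j + \<gamma> * C $ i $ j = 0)
      \<longrightarrow> \<alpha> = 0 \<and> \<beta> = 0 \<and> \<gamma> = 0)"

end

theory Submission
  imports Defs
begin


lemma minv:
  fixes A :: "'a::field^'n^'n"
  assumes "invertible A"
  shows "A ** matrix_inv A = mat 1" "matrix_inv A ** A = mat 1"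
  using someI_ex[OF assms[unfolded invertible_def]] unfolding matrix_inv_def by auto

lemma minv_inv:
  fixes A :: "'a::field^'n^'n"
  assumes "invertible A"
  shows "invertible (matrix_inv A)" "matrix_inv (matrix_inv A) = A"
proof -
  show i: "invertible (matrix_inv A)" using minv[OF assms] unfolding invertible_def by blast
  have "matrix_inv (matrix_inv A) = (A ** matrix_inv A) ** matrix_inv (matrix_inv A)"
    by (simp add: minv[OF assms])
  also have "\<dots> = A" by (metis matrix_mul_assoc minv(1)[OF i] matrix_mul_rid)
  finally show "matrix_inv (matrix_inv A) = A" .
qed

lemma det_minv:
  fixes A :: "'a::field^'n^'n"
  assumes "invertible A"
  shows "det (matrix_inv A) = inverse (det A)"
proof -
  have "det A * det (matrix_inv A) = 1"
    using det_mul[of A "matrix_inv A"] minv[OF assms] by simp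
  moreover have "det A \<noteq> 0" using assms invertible_det_nz by blast
  ultimately show ?thesis by (simp add: field_simps)
qed

lemma SI_act:
  fixes f :: "'k::field rep33 \<Rightarrow> 'k"
  assumes f: "f \<in> SI (a, b)" and h: "invertible h" and g: "invertible g"
  shows "f (\<lambda>x. h ** V x ** g) = det g powi a * inverse (det h) powi b * f V"
proof -
  have hi: "invertible (matrix_inv h)" using minv_inv[OF h] by simp
  have "f (rep_act (matrix_inv g) (matrix_inv (matrix_inv h)) V)
        = det g powi a * det (matrix_inv h) powi b * f V"
    using f hi g unfolding SI_def by auto
  moreover have "rep_act (matrix_inv g) (matrix_inv (matrix_inv h)) V = (\<lambda>x. h ** V x ** g)"
    unfolding rep_act_def using minv_inv[OF h] minv_inv[OF g] by simp
  ultimately show ?thesis using det_minv[OF h] by simp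
qed

lemma SI11_act:
  fixes f :: "'k::field rep33 \<Rightarrow> 'k"
  assumes f: "f \<in> SI (1, -1)" and h: "det h \<noteq> 0" and g: "det g \<noteq> 0"
    and M: "\<And>x. M' x = h ** M x ** g"
  shows "f M' = det h * det g * f M"
proof -
  have "M' = (\<lambda>x. h ** M x ** g)" using M by auto
  then show ?thesis using SI_act[OF f, of h g M] h g
    by (simp add: invertible_det_nz power_int_minus)
qed

definition lin :: "'k::comm_ring_1 rep33 \<Rightarrow> 'k rep33 \<Rightarrow> 'k \<Rightarrow> 'k rep33" where
  "lin P Q t = (\<lambda>x. \<chi> i j. P x $ i $ j + t * Q x $ i $ j)"

lemma poly_fun_poly:
  assumes "f \<in> poly_fun"
  shows "\<exists>p. \<forall>t. f (lin P Q t) = poly p t"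
  using assms
proof induction
  case (const c) then show ?case by (intro exI[of _ "[:c:]"]) simp
next
  case (coord x i j) then show ?case
    by (intro exI[of _ "[:P x $ i $ j, Q x $ i $ j:]"]) (simp add: lin_def)
next
  case (add f g)
  then obtain p q where "\<forall>t. f (lin P Q t) = poly p t" "\<forall>t. g (lin P Q t) = poly q t" by blast
  then show ?case by (intro exI[of _ "p + q"]) simp
next
  case (mult f g)
  then obtain p q where "\<forall>t. f (lin P Q t) = poly p t" "\<forall>t. g (lin P Q t) = poly q t" by blast
  then show ?case by (intro exI[of _ "p * q"]) simp
qed

lemma poly_eq_nz:
  fixes p q :: "'k::field_char_0 poly"
  assumes "\<And>t. t \<noteq> 0 \<Longrightarrow> poly p t = poly q t"
  shows "p = q"
proof (rule ccontr)
  assume "p \<noteq> q"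
  then have "p - q \<noteq> 0" by simp
  then have fin: "finite {t. poly (p - q) t = 0}" by (rule poly_roots_finite)
  have "UNIV - {0} \<subseteq> {t. poly (p - q) t = 0}" using assms by auto
  then have "finite (UNIV - {0::'k})" using fin finite_subset by blast
  then have "finite (UNIV :: 'k set)" by simp
  then show False using infinite_UNIV_char_0 by blast
qed

lemma poly_recip:
  fixes q h :: "'k::field_char_0 poly"
  assumes "\<And>t. t \<noteq> 0 \<Longrightarrow> poly q t = t * poly h (inverse t)"
  shows "poly q 1 = poly q 0 + poly h 0"
proof -
  let ?m = "degree h"
  have "monom 1 ?m * q = monom 1 1 * reflect_poly h"
  proof (rule poly_eq_nz)
    fix t :: 'k assume t: "t \<noteq> 0"
    show "poly (monom 1 ?m * q) t = poly (monom 1 1 * reflect_poly h) t"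
      using assms[OF t] t by (simp add: poly_monom poly_reflect_poly_nz)
  qed
  then have c: "\<And>k. coeff (monom 1 ?m * q) k = coeff (monom 1 1 * reflect_poly h) k" by simp
  have q: "q = [:coeff h 1, coeff h 0:]"
  proof (rule poly_eqI)
    fix n
    have cn: "coeff q n = coeff (monom 1 1 * reflect_poly h) (n + ?m)"
      using c[of "n + ?m"] by (simp add: coeff_monom_mult)
    show "coeff q n = coeff [:coeff h 1, coeff h 0:] n"
    proof (cases n)
      case 0
      then show ?thesis using cn
        by (cases ?m) (auto simp: coeff_monom_mult coeff_reflect_poly coeff_eq_0)
    next
      case (Suc k)
      then show ?thesis using cn
        by (cases k) (auto simp: coeff_monom_mult coeff_reflect_poly coeff_eq_0 coeff_pCons)
    qed
  qed
  show ?thesis by (subst q, subst q) (simp add: poly_0_coeff_0)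
qed



definition adj3 :: "'k::comm_ring_1^3^3 \<Rightarrow> 'k^3^3" where
 "adj3 A = (\<chi> i j. A$(j+1)$(i+1)*A$(j+2)$(i+2) - A$(j+1)$(i+2)*A$(j+2)$(i+1))"

lemma three_simps: "(1::3)+1 = 2" "(1::3)+2 = 3" "(2::3)+1 = 3" "(2::3)+2 = 1" "(3::3)+1 = 1" "(3::3)+2 = 2" "(4::3) = 1" "(5::3) = 2"
  by simp_all

lemma adj3_mul: "adj3 ((X::'k::comm_ring_1^3^3) ** Y) = adj3 Y ** adj3 X"
  unfolding vec_eq_iff forall_3 adj3_def matrix_matrix_mult_def
  apply (simp add: sum_3 three_simps)
  apply (intro conjI)
  by (simp_all add: algebra_simps)

definition sm :: "'k::comm_ring_1 \<Rightarrow> 'k^3^3 \<Rightarrow> 'k^3^3" where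
  "sm c A = (\<chi> i j. c * A$i$j)"

lemma adjL: "adj3 (X::'k::comm_ring_1^3^3) ** X = sm (det X) (mat 1)"
  unfolding vec_eq_iff forall_3 adj3_def matrix_matrix_mult_def sm_def det_3 mat_def
  apply (simp add: sum_3 three_simps)
  apply (intro conjI)
  by (simp_all add: algebra_simps)

lemma adjR: "(X::'k::comm_ring_1^3^3) ** adj3 X = sm (det X) (mat 1)"
  unfolding vec_eq_iff forall_3 adj3_def matrix_matrix_mult_def sm_def det_3 mat_def
  apply (simp add: sum_3 three_simps)
  apply (intro conjI)
  by (simp_all add: algebra_simps)

lemma sm_left: "sm c A ** B = sm c (A ** B)"
  unfolding vec_eq_iff sm_def matrix_matrix_mult_def by (simp add: sum_distrib_left algebra_simps)
lemma sm_right: "A ** sm c B = sm c (A ** B)"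
  unfolding vec_eq_iff sm_def matrix_matrix_mult_def by (simp add: sum_distrib_left algebra_simps)
lemma sm_sm: "sm a (sm b A) = sm (a * b) A"
  unfolding vec_eq_iff sm_def by (simp add: algebra_simps)
lemma trace_sm: "trace (sm c A) = c * trace A"
  unfolding trace_def sm_def by (simp add: sum_distrib_left)

lemma adjL': "adj3 (X::'k::comm_ring_1^3^3) ** (X ** Y) = sm (det X) Y"
  by (simp add: matrix_mul_assoc adjL sm_left)
lemma adjR': "(X::'k::comm_ring_1^3^3) ** (adj3 X ** Y) = sm (det X) Y"
  by (simp add: matrix_mul_assoc adjR sm_left)

lemma trace_rot: "trace (adj3 g ** (A1 ** (A2 ** (A3 ** (A4 ** (g::'k::comm_ring_1^3^3))))))
   = det g * trace (A1 ** (A2 ** (A3 ** A4)))"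
proof -
  have "trace (adj3 g ** (A1 ** (A2 ** (A3 ** (A4 ** g))))) = trace ((A1 ** (A2 ** (A3 ** (A4 ** g)))) ** adj3 g)"
    by (rule trace_mul_sym)
  also have "(A1 ** (A2 ** (A3 ** (A4 ** g)))) ** adj3 g = (A1 ** (A2 ** (A3 ** A4))) ** (g ** adj3 g)"
    by (simp add: matrix_mul_assoc)
  finally show ?thesis by (simp add: adjR sm_right trace_sm)
qed

definition FF :: "'k::comm_ring_1 rep33 \<Rightarrow> 'k" where
  "FF V = trace (adj3 (V Arr_a) ** V Arr_b ** adj3 (V Arr_c) ** V Arr_b)"

lemma FF_act: "FF (\<lambda>x. h ** V x ** g) = det h ^ 2 * det g ^ 2 * FF (V :: 'k::comm_ring_1 rep33)"
proof -
  have e: "adj3 (h ** X ** g) = adj3 g ** (adj3 X ** adj3 h)" for X by (simp add: adj3_mul)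
  have "FF (\<lambda>x. h ** V x ** g) = trace (adj3 g ** (adj3 (V Arr_a) ** (adj3 h ** (h ** (V Arr_b ** (g **
     (adj3 g ** (adj3 (V Arr_c) ** (adj3 h ** (h ** (V Arr_b ** g)))))))))))"
    unfolding FF_def e by (simp only: matrix_mul_assoc[symmetric])
  also have "\<dots> = det h * det g * det h * trace (adj3 g ** (adj3 (V Arr_a) ** (V Arr_b ** (adj3 (V Arr_c) ** (V Arr_b ** g)))))"
    by (simp only: adjL' adjR' sm_left sm_right sm_sm trace_sm)
  also have "\<dots> = det h ^ 2 * det g ^ 2 * FF V"
    unfolding trace_rot FF_def by (simp add: matrix_mul_assoc power2_eq_square algebra_simps)
  finally show ?thesis .
qed


lemma pf_const: "(\<lambda>W. c) \<in> poly_fun" by (rule poly_fun.const)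
lemma pf_add: "f \<in> poly_fun \<Longrightarrow> g \<in> poly_fun \<Longrightarrow> (\<lambda>W. f W + g W) \<in> poly_fun" by (rule poly_fun.add)
lemma pf_mult: "f \<in> poly_fun \<Longrightarrow> g \<in> poly_fun \<Longrightarrow> (\<lambda>W. f W * g W) \<in> poly_fun" by (rule poly_fun.mult)
lemma pf_diff: "f \<in> poly_fun \<Longrightarrow> g \<in> poly_fun \<Longrightarrow> (\<lambda>W. f W - g W) \<in> poly_fun"
proof -
  assume f: "f \<in> poly_fun" and g: "g \<in> poly_fun"
  have "(\<lambda>W. f W + (\<lambda>W. -1) W * g W) \<in> poly_fun" by (intro pf_add pf_mult f g pf_const)
  then show ?thesis by simp
qed

definition mpf :: "('k::comm_ring_1 rep33 \<Rightarrow> 'k^3^3) \<Rightarrow> bool" where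
  "mpf M \<longleftrightarrow> (\<forall>i j. (\<lambda>V. M V $ i $ j) \<in> poly_fun)"

lemma mpf_var: "mpf (\<lambda>V. V x)" unfolding mpf_def by (auto intro: poly_fun.coord)

lemma mpf_mul: "mpf M \<Longrightarrow> mpf N \<Longrightarrow> mpf (\<lambda>V. M V ** N V)"
  unfolding mpf_def matrix_matrix_mult_def by (simp add: sum_3 pf_add pf_mult)

lemma mpf_adj: "mpf M \<Longrightarrow> mpf (\<lambda>V. adj3 (M V))"
  unfolding mpf_def adj3_def by (simp add: pf_diff pf_mult)

lemma pf_trace: "mpf M \<Longrightarrow> (\<lambda>V. trace (M V)) \<in> poly_fun"
  unfolding mpf_def trace_def by (simp add: sum_3 pf_add)

lemma FF_poly: "(FF :: 'k::comm_ring_1 rep33 \<Rightarrow> 'k) \<in> poly_fun"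
  unfolding FF_def by (intro pf_trace mpf_mul mpf_adj mpf_var)

lemma FF_SI: "(FF :: 'k::field rep33 \<Rightarrow> 'k) \<in> SI (2, -2)"
  unfolding SI_def
proof (intro CollectI conjI FF_poly allI impI)
  fix g1 g2 :: "'k^3^3" and W :: "'k rep33"
  assume gi: "invertible g1 \<and> invertible g2"
  have "rep_act (matrix_inv g1) (matrix_inv g2) W = (\<lambda>x. matrix_inv g2 ** W x ** g1)"
    unfolding rep_act_def using minv_inv(2)[of g1] gi by simp
  then show "FF (rep_act (matrix_inv g1) (matrix_inv g2) W) = det g1 powi fst (2::int, -2::int) * det g2 powi snd (2::int, -2::int) * FF W"
    using gi by (simp add: FF_act det_minv power_int_minus power_inverse)
qed



lemma skew_entries:
  fixes M :: "'k::field_char_0^3^3"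
  assumes "skew_symmetric M"
  shows "M $ i $ i = 0" "M $ j $ i = - M $ i $ j"
proof -
  have t: "transpose M $ j $ i = (- M) $ j $ i" for i j using assms unfolding skew_symmetric_def by simp
  have t2: "M $ j $ i = - M $ i $ j" for i j using t[of i j] by (simp add: transpose_def)
  show "M $ j $ i = - M $ i $ j" by (rule t2)
  have "M $ i $ i = - M $ i $ i" by (rule t2)
  then show "M $ i $ i = 0" by simp
qed

definition Nm :: "'k::field rep33 \<Rightarrow> 'k^3^3" where
  "Nm W = vector [vector [W Arr_a $1$2, W Arr_a $1$3, W Arr_a $2$3],
                  vector [W Arr_b $1$2, W Arr_b $1$3, W Arr_b $2$3],
                  vector [W Arr_c $1$2, W Arr_c $1$3, W Arr_c $2$3]]"

lemma FF_skew:
  fixes W :: "'k::field_char_0 rep33"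
  assumes sk: "\<And>x. skew_symmetric (W x)"
  shows "FF W = - (det (Nm W) * det (Nm W))"
proof -
  have e: "\<And>x i. W x $ i $ i = 0" "\<And>x. W x $ 2 $ 1 = - W x $ 1 $ 2"
    "\<And>x. W x $ 3 $ 1 = - W x $ 1 $ 3" "\<And>x. W x $ 3 $ 2 = - W x $ 2 $ 3"
    by (rule skew_entries[OF sk])+
  show ?thesis
    unfolding FF_def adj3_def trace_def matrix_matrix_mult_def det_3 Nm_def
    by (simp add: sum_3 three_simps e vector_3) (simp add: algebra_simps power2_eq_square)
qed



lemma neg3: "x*a + y*b + z*c = 0 \<Longrightarrow> x * - a + y * - b + z * - c = (0::'a::comm_ring_1)"
proof -
  assume h: "x*a + y*b + z*c = 0"
  have "x * - a + y * - b + z * - c = - (x*a + y*b + z*c)" by (simp add: algebra_simps)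
  then show ?thesis using h by simp
qed

lemma Nm_nz:
  fixes W :: "'k::field_char_0 rep33"
  assumes sk: "\<And>x. skew_symmetric (W x)"
    and li: "lin_indep3 (W Arr_a) (W Arr_b) (W Arr_c)"
  shows "det (Nm W) \<noteq> 0"
proof
  assume "det (Nm W) = 0"
  then have "\<not> invertible (Nm W)" using invertible_det_nz by blast
  then have "\<not> (\<exists>B. Nm W ** B = mat 1)" using invertible_right_inverse by blast
  then obtain c where c: "sum (\<lambda>i. c i *s row i (Nm W)) UNIV = 0" and ci: "\<exists>i. c i \<noteq> 0"
    unfolding matrix_right_invertible_independent_rows by blast
  have k: "c 1 * W Arr_a $1$2 + c 2 * W Arr_b $1$2 + c 3 * W Arr_c $1$2 = 0"
          "c 1 * W Arr_a $1$3 + c 2 * W Arr_b $1$3 + c 3 * W Arr_c $1$3 = 0"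
          "c 1 * W Arr_a $2$3 + c 2 * W Arr_b $2$3 + c 3 * W Arr_c $2$3 = 0"
    using c unfolding vec_eq_iff forall_3
    by (simp_all add: sum_3 row_def Nm_def vector_3)
  have e: "\<And>x i. W x $ i $ i = 0" "\<And>x. W x $ 2 $ 1 = - W x $ 1 $ 2"
    "\<And>x. W x $ 3 $ 1 = - W x $ 1 $ 3" "\<And>x. W x $ 3 $ 2 = - W x $ 2 $ 3"
    by (rule skew_entries[OF sk])+
  have k': "c 1 * W Arr_a $2$1 + c 2 * W Arr_b $2$1 + c 3 * W Arr_c $2$1 = 0"
          "c 1 * W Arr_a $3$1 + c 2 * W Arr_b $3$1 + c 3 * W Arr_c $3$1 = 0"
          "c 1 * W Arr_a $3$2 + c 2 * W Arr_b $3$2 + c 3 * W Arr_c $3$2 = 0"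
    unfolding e using k by (simp_all only: neg3)
  have "\<forall>i j. c 1 * W Arr_a $ i $ j + c 2 * W Arr_b $ i $ j + c 3 * W Arr_c $ i $ j = 0"
    unfolding forall_3 using k k' by (simp add: e)
  then have "c 1 = 0 \<and> c 2 = 0 \<and> c 3 = 0" using li unfolding lin_indep3_def by blast
  then show False using ci exhaust_3 by metis
qed



lemma add_gen:
  fixes f :: "'k::field_char_0 rep33 \<Rightarrow> 'k" and \<Phi> :: "(theta3_arrow \<Rightarrow> 'k^3) \<Rightarrow> 'k rep33"
  assumes f: "f \<in> poly_fun"
    and aff: "\<And>A B. \<exists>P Q. \<forall>t. \<Phi> (\<lambda>x. A x + t *s B x) = lin P Q t"
    and hom: "\<And>R s. s \<noteq> 0 \<Longrightarrow> f (\<Phi> (\<lambda>x. s *s R x)) = s * f (\<Phi> R)"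
  shows "f (\<Phi> (\<lambda>x. A x + B x)) = f (\<Phi> A) + f (\<Phi> B)"
proof -
  obtain P Q where PQ: "\<forall>t. \<Phi> (\<lambda>x. A x + t *s B x) = lin P Q t" using aff by blast
  obtain P' Q' where PQ': "\<forall>t. \<Phi> (\<lambda>x. B x + t *s A x) = lin P' Q' t" using aff by blast
  obtain q where q: "\<forall>t. f (lin P Q t) = poly q t" using poly_fun_poly[OF f] by blast
  obtain h where h: "\<forall>t. f (lin P' Q' t) = poly h t" using poly_fun_poly[OF f] by blast
  have qq: "poly q t = f (\<Phi> (\<lambda>x. A x + t *s B x))" for t using q PQ by simp
  have hh: "poly h t = f (\<Phi> (\<lambda>x. B x + t *s A x))" for t using h PQ' by simp
  have "poly q t = t * poly h (inverse t)" if t: "t \<noteq> 0" for t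
  proof -
    have e: "(\<lambda>x. A x + t *s B x) = (\<lambda>x. t *s (B x + inverse t *s A x))"
      using t by (simp add: vec_eq_iff algebra_simps)
    show ?thesis unfolding qq hh e by (rule hom[OF t])
  qed
  from poly_recip[OF this] show ?thesis unfolding qq hh by simp
qed

definition setrow :: "'k rep33 \<Rightarrow> 3 \<Rightarrow> (theta3_arrow \<Rightarrow> 'k^3) \<Rightarrow> 'k rep33" where
  "setrow V i R = (\<lambda>x. \<chi> a. if a = i then R x else V x $ a)"

definition diagm :: "(3 \<Rightarrow> 'k::comm_ring_1) \<Rightarrow> 'k^3^3" where
  "diagm d = (\<chi> a b. if a = b then d a else 0)"

lemma prod3: "prod f (UNIV::3 set) = f 1 * f 2 * f 3"
  unfolding UNIV_3 by (simp add: ac_simps)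
lemma det_diagm: "det (diagm d) = d 1 * d 2 * d 3"
  by (subst det_diagonal) (simp_all add: diagm_def prod3)
lemma diag_mul: "diagm d ** M = (\<chi> a b. d a * M$a$b)"
  unfolding diagm_def matrix_matrix_mult_def vec_eq_iff by (simp add: sum_3 forall_3)
lemma mul_diag: "M ** diagm d = (\<chi> a b. M$a$b * d b)"
  unfolding diagm_def matrix_matrix_mult_def vec_eq_iff by (simp add: sum_3 forall_3)

lemma SI_poly: "f \<in> SI \<sigma> \<Longrightarrow> f \<in> poly_fun" unfolding SI_def by auto

lemma rowadd:
  fixes f :: "'k::field_char_0 rep33 \<Rightarrow> 'k"
  assumes f: "f \<in> SI (1, -1)"
  shows "f (setrow V i (\<lambda>x. A x + B x)) = f (setrow V i A) + f (setrow V i B)"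
proof (rule add_gen[OF SI_poly[OF f], of "setrow V i"])
  fix A B :: "theta3_arrow \<Rightarrow> 'k^3"
  show "\<exists>P Q. \<forall>t. setrow V i (\<lambda>x. A x + t *s B x) = lin P Q t"
    by (intro exI[of _ "setrow V i A"] exI[of _ "\<lambda>x. \<chi> a b. if a = i then B x $ b else 0"])
      (auto simp: lin_def setrow_def vec_eq_iff)
next
  fix R :: "theta3_arrow \<Rightarrow> 'k^3" and s :: 'k assume s: "s \<noteq> 0"
  let ?D = "diagm (\<lambda>a. if a = i then s else 1)"
  have "det ?D = s" unfolding det_diagm using exhaust_3[of i] by auto
  moreover have "det (mat 1 :: 'k^3^3) = 1" by simp
  moreover have "setrow V i (\<lambda>x. s *s R x) x = ?D ** setrow V i R x ** mat 1" for x
    by (auto simp: diag_mul setrow_def vec_eq_iff)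
  ultimately show "f (setrow V i (\<lambda>x. s *s R x)) = s * f (setrow V i R)"
    using SI11_act[OF f, of ?D "mat 1"] s by simp
qed

lemma colzero:
  fixes f :: "'k::field_char_0 rep33 \<Rightarrow> 'k"
  assumes f: "f \<in> SI (1, -1)" and z: "\<And>x a. V x $ a $ j = 0"
  shows "f V = 0"
proof -
  let ?D = "diagm (\<lambda>a. if a = j then 2 else 1) :: 'k^3^3"
  have "det ?D = 2" unfolding det_diagm using exhaust_3[of j] by auto
  moreover have "V x = mat 1 ** V x ** ?D" for x
    using z by (auto simp: mul_diag vec_eq_iff)
  ultimately have "f V = 1 * 2 * f V"
    using SI11_act[OF f, of "mat 1" ?D V V] by simp
  then show ?thesis by simp
qed



definition mat3 :: "(theta3_arrow \<Rightarrow> 'k^3) \<Rightarrow> (theta3_arrow \<Rightarrow> 'k^3) \<Rightarrow> (theta3_arrow \<Rightarrow> 'k^3) \<Rightarrow> 'k rep33" where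
  "mat3 R1 R2 R3 = (\<lambda>x. \<chi> a. if a = 1 then R1 x else if a = 2 then R2 x else R3 x)"

lemma mat3_row1: "mat3 R R2 R3 = setrow (mat3 R1 R2 R3) 1 R"
  unfolding mat3_def setrow_def by (rule ext) (simp add: vec_eq_iff forall_3)
lemma mat3_row2: "mat3 R1 R R3 = setrow (mat3 R1 R2 R3) 2 R"
  unfolding mat3_def setrow_def by (rule ext) (simp add: vec_eq_iff forall_3)
lemma mat3_row3: "mat3 R1 R2 R = setrow (mat3 R1 R2 R3) 3 R"
  unfolding mat3_def setrow_def by (rule ext) (simp add: vec_eq_iff forall_3)

lemma add1: "f \<in> SI (1,-1) \<Longrightarrow> f (mat3 (\<lambda>x. A x + B x) R2 R3 :: 'k::field_char_0 rep33) = f (mat3 A R2 R3) + f (mat3 B R2 R3)"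
  using rowadd[of f "mat3 A R2 R3" 1 A B] by (simp only: mat3_row1[symmetric])
lemma add2: "f \<in> SI (1,-1) \<Longrightarrow> f (mat3 R1 (\<lambda>x. A x + B x) R3 :: 'k::field_char_0 rep33) = f (mat3 R1 A R3) + f (mat3 R1 B R3)"
  using rowadd[of f "mat3 R1 A R3" 2 A B] by (simp only: mat3_row2[symmetric])
lemma add3: "f \<in> SI (1,-1) \<Longrightarrow> f (mat3 R1 R2 (\<lambda>x. A x + B x) :: 'k::field_char_0 rep33) = f (mat3 R1 R2 A) + f (mat3 R1 R2 B)"
  using rowadd[of f "mat3 R1 R2 A" 3 A B] by (simp only: mat3_row3[symmetric])

definition Dg :: "(theta3_arrow \<Rightarrow> 'k::zero) \<Rightarrow> (theta3_arrow \<Rightarrow> 'k) \<Rightarrow> (theta3_arrow \<Rightarrow> 'k) \<Rightarrow> 'k rep33" where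
  "Dg u1 u2 u3 = mat3 (\<lambda>x. axis 1 (u1 x)) (\<lambda>x. axis 2 (u2 x)) (\<lambda>x. axis 3 (u3 x))"

definition P1 :: "'k::comm_ring_1^3^3" where "P1 = (\<chi> i j. if j = i + 1 then 1 else 0)"
definition P2 :: "'k::comm_ring_1^3^3" where "P2 = (\<chi> i j. if j = i + 2 then 1 else 0)"

lemma det_P1: "det (P1 :: 'k::comm_ring_1^3^3) = 1" by (simp add: det_3 P1_def)
lemma det_P2: "det (P2 :: 'k::comm_ring_1^3^3) = 1" by (simp add: det_3 P2_def)
lemma det_P1T: "det (transpose P1 :: 'k::comm_ring_1^3^3) = 1" by (simp add: det_P1)

lemma V1_eq: "mat3 (\<lambda>x. axis 2 (u1 x)) (\<lambda>x. axis 3 (u2 x)) (\<lambda>x. axis 1 (u3 x)) x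
   = mat 1 ** Dg u1 u2 u3 x ** (P1 :: 'k::comm_ring_1^3^3)"
  by (simp add: vec_eq_iff forall_3 matrix_matrix_mult_def sum_3 mat3_def Dg_def axis_def P1_def mat_def)

lemma V2_eq: "mat3 (\<lambda>x. axis 3 (u1 x)) (\<lambda>x. axis 1 (u2 x)) (\<lambda>x. axis 2 (u3 x)) x
   = mat 1 ** Dg u1 u2 u3 x ** (P2 :: 'k::comm_ring_1^3^3)"
  by (simp add: vec_eq_iff forall_3 matrix_matrix_mult_def sum_3 mat3_def Dg_def axis_def P2_def mat_def)

lemma cyc_eq: "Dg u3 u1 u2 x = transpose P1 ** Dg u1 u2 u3 x ** (P1 :: 'k::comm_ring_1^3^3)"
  by (simp add: vec_eq_iff forall_3 matrix_matrix_mult_def sum_3 mat3_def Dg_def axis_def P1_def transpose_def)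

lemma sgn1_eq: "Dg (\<lambda>x. - u1 x) (\<lambda>x. - u2 x) u3 x = diagm (\<lambda>a. if a = 3 then 1 else -1) ** Dg u1 u2 u3 x ** (mat 1 :: 'k::comm_ring_1^3^3)"
  by (simp add: vec_eq_iff forall_3 diag_mul mat3_def Dg_def axis_def)

lemma sgn2_eq: "Dg u1 u2 (\<lambda>x. - u3 x) x = diagm (\<lambda>a. if a = 3 then -1 else 1) ** Dg u1 u2 u3 x ** (mat 1 :: 'k::comm_ring_1^3^3)"
  by (simp add: vec_eq_iff forall_3 diag_mul mat3_def Dg_def axis_def)



lemma SI11_zero:
  fixes f :: "'k::field_char_0 rep33 \<Rightarrow> 'k" and W :: "'k rep33"
  assumes f: "f \<in> SI (1, -1)" and sk: "\<And>x. skew_symmetric (W x)"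
  shows "f W = 0"
proof -
  define p where "p x = W x $ 1 $ 2" for x
  define q where "q x = W x $ 1 $ 3" for x
  define r where "r x = W x $ 2 $ 3" for x
  define a1 where "a1 = (\<lambda>x. axis 2 (p x) :: 'k^3)"
  define b1 where "b1 = (\<lambda>x. axis 3 (q x) :: 'k^3)"
  define a2 where "a2 = (\<lambda>x. axis 1 (- p x) :: 'k^3)"
  define b2 where "b2 = (\<lambda>x. axis 3 (r x) :: 'k^3)"
  define a3 where "a3 = (\<lambda>x. axis 1 (- q x) :: 'k^3)"
  define b3 where "b3 = (\<lambda>x. axis 2 (- r x) :: 'k^3)"
  have W: "W = mat3 (\<lambda>x. a1 x + b1 x) (\<lambda>x. a2 x + b2 x) (\<lambda>x. a3 x + b3 x)"
  proof
    fix x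
    note e = skew_entries(1)[OF sk[of x]] skew_entries(2)[OF sk[of x], of 1 2]
       skew_entries(2)[OF sk[of x], of 1 3] skew_entries(2)[OF sk[of x], of 2 3]
    show "W x = mat3 (\<lambda>x. a1 x + b1 x) (\<lambda>x. a2 x + b2 x) (\<lambda>x. a3 x + b3 x) x"
      by (simp add: vec_eq_iff forall_3 mat3_def a1_def b1_def a2_def b2_def a3_def b3_def
          p_def q_def r_def axis_def e)
  qed
  let ?R2 = "\<lambda>x. a2 x + b2 x" and ?R3 = "\<lambda>x. a3 x + b3 x"
  have z1: "f (mat3 a1 a2 a3) = 0"
    by (rule colzero[OF f, of _ 3]) (simp add: mat3_def a1_def a2_def a3_def axis_def)
  have z1': "f (mat3 a1 a2 b3) = 0"
    by (rule colzero[OF f, of _ 3]) (simp add: mat3_def a1_def a2_def b3_def axis_def)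
  have z2: "f (mat3 a1 b2 b3) = 0"
    by (rule colzero[OF f, of _ 1]) (simp add: mat3_def a1_def b2_def b3_def axis_def)
  have z3: "f (mat3 b1 a2 a3) = 0"
    by (rule colzero[OF f, of _ 2]) (simp add: mat3_def b1_def a2_def a3_def axis_def)
  have z4: "f (mat3 b1 b2 a3) = 0"
    by (rule colzero[OF f, of _ 2]) (simp add: mat3_def b1_def b2_def a3_def axis_def)
  have z5: "f (mat3 b1 b2 b3) = 0"
    by (rule colzero[OF f, of _ 1]) (simp add: mat3_def b1_def b2_def b3_def axis_def)
  have "f W = f (mat3 a1 b2 a3) + f (mat3 b1 a2 b3)"
    unfolding W add1[OF f] add2[OF f] add3[OF f] z1 z1' z2 z3 z4 z5 by simp
  also have "f (mat3 a1 b2 a3) = f (Dg p r (\<lambda>x. - q x))"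
    using SI11_act[OF f, of "mat 1" P1, OF _ _ V1_eq] unfolding a1_def b2_def a3_def
    by (simp add: det_P1)
  also have "\<dots> = - f (Dg p r q)"
    using SI11_act[OF f, of _ "mat 1", OF _ _ sgn2_eq] by (simp add: det_diagm)
  also have "f (mat3 b1 a2 b3) = f (Dg q (\<lambda>x. - p x) (\<lambda>x. - r x))"
    using SI11_act[OF f, of "mat 1" P2, OF _ _ V2_eq] unfolding b1_def a2_def b3_def
    by (simp add: det_P2)
  also have "\<dots> = f (Dg (\<lambda>x. - p x) (\<lambda>x. - r x) q)"
    using SI11_act[OF f, of "transpose P1" P1, OF _ _ cyc_eq] by (simp add: det_P1)
  also have "\<dots> = f (Dg p r q)"
    using SI11_act[OF f, of _ "mat 1", OF _ _ sgn1_eq] by (simp add: det_diagm)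
  finally show ?thesis by simp
qed


theorem mainTheorem11:
  fixes W :: "'k::field_char_0 rep33"
  assumes "alg_closed TYPE('k)"
    and "skew_symmetric (W Arr_a)" "skew_symmetric (W Arr_b)" "skew_symmetric (W Arr_c)"
    and "lin_indep3 (W Arr_a) (W Arr_b) (W Arr_c)"
  shows "(\<exists>n::int. n \<ge> 1 \<and> (n * 1, n * (-1)) \<in> S_W W) \<and> (1, -1) \<notin> S_W W"
proof
  have sk: "skew_symmetric (W x)" for x using assms(2-4) by (cases x) auto
  have "FF W \<noteq> 0" using FF_skew[OF sk] Nm_nz[OF sk assms(5)] by simp
  then have "(2, -2) \<in> S_W W" unfolding S_W_def using FF_SI by blast
  then show "\<exists>n::int. n \<ge> 1 \<and> (n * 1, n * (-1)) \<in> S_W W" by (intro exI[of _ 2]) simp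
  show "(1, -1) \<notin> S_W W"
  proof
    assume "(1, -1) \<in> S_W W"
    then obtain f where f: "f \<in> SI (1, -1)" and fW: "f W \<noteq> 0" unfolding S_W_def by blast
    show False using SI11_zero[OF f sk] fW by simp
  qed
qed

end
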